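(* Let $\mathcal{A}=\{1,\dots,n\}$ be a set of agents connected by a directed chain $1\to 2\to\cdots\to n$. Each agent $i$ has a finite local strategy set $\mathcal{P}_i$, the sets $\mathcal{P}_1,\dots,\mathcal{P}_n$ pairwise disjoint, and an integer budget $\kappa_i\ge 1$. Let $\mathcal{P}=\bigcup_{i\in\mathcal{A}}\mathcal{P}_i$. Let $f:2^{\mathcal{P}}\to\mathbb{R}_{\ge 0}$ be normal ($f(\emptyset)=0$), monotone nondecreasing and submodular. Let $\mathcal{S}^\star$ be a maximizer of $f(\mathcal{S})$ over $\mathcal{I}=\{\mathcal{S}\subset\mathcal{P} : |\mathcal{S}\cap\mathcal{P}_i|\le\kappa_i \ \forall i\in\mathcal{A}\}$. The agents run the decentralized sequential greedy algorithm, in which each message transmission may fail. Agent $1$ starts from $\bar{\mathcal{S}}_0=\emptyset$. For $i\ge 2$, agent $i$ starts from the set $\bar{\mathcal{S}}_{i-1}$ if the message from agent $i-1$ was delivered, and from $\emptyset$ otherwise. Starting from this set, agent $i$ performs $\kappa_i$ greedy steps; in each step it adds to its current set an element $s\in\mathcal{P}_i$ not yet selected that maximizes the marginal gain $f(\text{current}\cup\{s\})-f(\text{current})$. Call the result $\bar{\mathcal{S}}_i$; agent $i$ then sends $\bar{\mathcal{S}}_i$ to agent $i+1$. The message from agent $i$ to agent $i+1$ is successfully delivered with probability $p_i$, for $i=1,\dots,n-1$. The output of the algorithm is $\bar{\mathcal{S}}=\bigcup_{i\in\mathcal{A}}\bar{\mathcal{S}}_i$. Let $\mathcal{W}(\mathcal{G}_I)$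 denote the (random) clique number of the information graph $\mathcal{G}_I$ of the run. Then $$\mathbb{E}[f(\bar{\mathcal{S}})]\ \ge\ \alpha_p\, f(\mathcal{S}^\star),\qquad\text{where } \alpha_p=\sum_{l=1}^{n}\frac{1}{2+n-l}\,P\big(\mathcal{W}(\mathcal{G}_I)=l\big).$$
   Context: The information graph $\mathcal{G}_I$ of a run is the directed graph on $\mathcal{A}$ with an arc from agent $i$ to agent $j$ whenever agent $j$ has received agent $i$'s information, either directly or relayed through intermediate agents along the chain. Equivalently, there is an arc $i\to j$ for $i<j$ exactly when all messages $i\to i+1,\dots,j-1\to j$ were delivered. The clique number $\mathcal{W}(\mathcal{G}_I)$ is the size of the largest complete subgraph of the undirected version of $\mathcal{G}_I$. It equals one plus the length of the longest run of consecutive successfully delivered chain edges, and it equals $n$ when all messages are delivered. *)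

theory Defs
  imports Complex_Main
begin

text \<open>Agents are 1..n; chain edge i (1 <= i < n) is the message from agent i to agent i+1.
  A run outcome is the set D of delivered edges, D a subset of {1..<n}.\<close>

definition normal_fn :: "('a set \<Rightarrow> real) \<Rightarrow> bool" where
  "normal_fn f \<longleftrightarrow> f {} = 0"

definition monotone_fn :: "'a set \<Rightarrow> ('a set \<Rightarrow> real) \<Rightarrow> bool" where
  "monotone_fn U f \<longleftrightarrow> (\<forall>A B. A \<subseteq> B \<and> B \<subseteq> U \<longrightarrow> f A \<le> f B)"

definition submodular_fn :: "'a set \<Rightarrow> ('a set \<Rightarrow> real) \<Rightarrow> bool" where
  "submodular_fn U f \<longleftrightarrow> (\<forall>A B x. A \<subseteq> B \<and> B \<subseteq> U \<and> x \<in> U - B \<longrightarrow>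
       f (insert x B) - f B \<le> f (insert x A) - f A)"

definition feasible :: "nat \<Rightarrow> (nat \<Rightarrow> 'a set) \<Rightarrow> (nat \<Rightarrow> nat) \<Rightarrow> 'a set set" where
  "feasible n P \<kappa> = {S. S \<subseteq> (\<Union>i\<in>{1..n}. P i) \<and> (\<forall>i\<in>{1..n}. card (S \<inter> P i) \<le> \<kappa> i)}"

definition greedy_choice :: "('a set \<Rightarrow> real) \<Rightarrow> 'a set \<Rightarrow> 'a set \<Rightarrow> 'a \<Rightarrow> bool" where
  "greedy_choice f Pi cur s \<longleftrightarrow> s \<in> Pi - cur \<and>
     (\<forall>t \<in> Pi - cur. f (insert t cur) - f cur \<le> f (insert s cur) - f cur)"

inductive greedy_steps :: "('a set \<Rightarrow> real) \<Rightarrow> 'a set \<Rightarrow> nat \<Rightarrow> 'a set \<Rightarrow> 'a set \<Rightarrow> bool"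
  for f Pi where
  zero: "greedy_steps f Pi 0 T T"
| step: "greedy_steps f Pi k T R \<Longrightarrow> greedy_choice f Pi R s \<Longrightarrow> greedy_steps f Pi (Suc k) T (insert s R)"
| exhausted: "greedy_steps f Pi k T R \<Longrightarrow> Pi - R = {} \<Longrightarrow> greedy_steps f Pi (Suc k) T R"

definition start_set :: "nat set \<Rightarrow> (nat \<Rightarrow> 'a set) \<Rightarrow> nat \<Rightarrow> 'a set" where
  "start_set D Sbar i = (if i \<ge> 2 \<and> i - 1 \<in> D then Sbar (i - 1) else {})"

definition valid_run :: "nat \<Rightarrow> (nat \<Rightarrow> 'a set) \<Rightarrow> (nat \<Rightarrow> nat) \<Rightarrow> ('a set \<Rightarrow> real)
    \<Rightarrow> nat set \<Rightarrow> (nat \<Rightarrow> 'a set) \<Rightarrow> bool" where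
  "valid_run n P \<kappa> f D Sbar \<longleftrightarrow>
     (\<forall>i\<in>{1..n}. greedy_steps f (P i) (\<kappa> i) (start_set D Sbar i) (Sbar i))"

definition outcome_prob :: "nat \<Rightarrow> (nat \<Rightarrow> real) \<Rightarrow> nat set \<Rightarrow> real" where
  "outcome_prob n p D = (\<Prod>i\<in>{1..<n}. if i \<in> D then p i else 1 - p i)"

definition info_arc :: "nat set \<Rightarrow> nat \<Rightarrow> nat \<Rightarrow> bool" where
  "info_arc D i j \<longleftrightarrow> i < j \<and> (\<forall>k. i \<le> k \<and> k < j \<longrightarrow> k \<in> D)"

definition clique_number :: "nat \<Rightarrow> nat set \<Rightarrow> nat" where
  "clique_number n D = Max {card K | K. K \<subseteq> {1..n} \<and>
      (\<forall>i\<in>K. \<forall>j\<in>K. i \<noteq> j \<longrightarrow> info_arc D i j \<or> info_arc D j i)}"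

end

theory Submission
  imports Defs
begin


lemma greedy_mono:
  assumes "greedy_steps f Pi k T R" shows "T \<subseteq> R \<and> R \<subseteq> T \<union> Pi"
  using assms by induction (auto simp: greedy_choice_def)

lemma greedy_bound:
  assumes "greedy_steps f Pi k T R" "R \<subseteq> G" "G \<subseteq> U" "x \<in> Pi - G" "x \<in> U"
    "submodular_fn U f"
  shows "real k * (f (insert x G) - f G) \<le> f R - f T"
  using assms
proof (induction arbitrary: G rule: greedy_steps.induct)
  case (zero T)
  then show ?case by simp
next
  case (step k T R s)
  have IH: "real k * (f (insert x G) - f G) \<le> f R - f T"
    using step by auto
  have g: "f (insert x R) - f R \<le> f (insert s R) - f R"
    using step.hyps(2) step.prems unfolding greedy_choice_def by auto
  have sm: "f (insert x G) - f G \<le> f (insert x R) - f R"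
    using step.prems unfolding submodular_fn_def by auto
  show ?case using IH g sm by (simp add: algebra_simps)
next
  case (exhausted k T R)
  then show ?case by auto
qed

lemma submod_sum:
  assumes "finite A" "G \<subseteq> U" "A \<subseteq> U" "submodular_fn U f"
  shows "f (G \<union> A) - f G \<le> (\<Sum>x\<in>A - G. f (insert x G) - f G)"
  using assms
proof (induction A rule: finite_induct)
  case empty
  then show ?case by simp
next
  case (insert a A)
  show ?case
  proof (cases "a \<in> G")
    case True
    then have "G \<union> insert a A = G \<union> A" "insert a A - G = A - G" by auto
    then show ?thesis using insert by simp
  next
    case False
    have e: "insert a A - G = insert a (A - G)" using False by auto
    have sm: "f (insert a (G \<union> A)) - f (G \<union> A) \<le> f (insert a G) - f G"
      using insert False unfolding submodular_fn_def by auto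
    have "G \<union> insert a A = insert a (G \<union> A)" by auto
    then show ?thesis using insert sm e by (simp add: sum.insert)
  qed
qed


lemma clique_le:
  assumes "D \<subseteq> {1..<n}"
  shows "clique_number n D \<le> card D + 1"
proof -
  let ?S = "{card K | K. K \<subseteq> {1..n} \<and>
      (\<forall>i\<in>K. \<forall>j\<in>K. i \<noteq> j \<longrightarrow> info_arc D i j \<or> info_arc D j i)}"
  have fD: "finite D" using assms finite_subset by blast
  have b: "c \<le> card D + 1" if "c \<in> ?S" for c
  proof -
    obtain K where K: "c = card K" "K \<subseteq> {1..n}"
      "\<forall>i\<in>K. \<forall>j\<in>K. i \<noteq> j \<longrightarrow> info_arc D i j \<or> info_arc D j i"
      using \<open>c \<in> ?S\<close> by blast
    have fK: "finite K" using K(2) finite_subset by blast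
    show ?thesis
    proof (cases "card K \<le> 1")
      case True then show ?thesis using K by simp
    next
      case False
      then have ne: "K \<noteq> {}" by auto
      define a where "a = Min K"
      define b where "b = Max K"
      have aK: "a \<in> K" and bK: "b \<in> K" using fK ne a_def b_def by auto
      have "a \<le> b" using fK ne a_def b_def aK by simp
      have "K \<subseteq> {a..b}" using fK a_def b_def by auto
      then have cK: "card K \<le> card {a..b}" by (intro card_mono) auto
      have ab: "a \<noteq> b"
      proof
        assume "a = b"
        then have "card {a..b} = 1" by simp
        then show False using cK False by simp
      qed
      have "info_arc D a b \<or> info_arc D b a" using K(3) aK bK ab by blast
      then have "info_arc D a b" using \<open>a \<le> b\<close> unfolding info_arc_def by auto
      then have sub: "{a..<b} \<subseteq> D" unfolding info_arc_def by auto
      have "card K \<le> card {a..b}" by (rule cK)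
      also have "\<dots> = card {a..<b} + 1" using \<open>a \<le> b\<close> by simp
      also have "\<dots> \<le> card D + 1" using card_mono[OF fD sub] by simp
      finally show ?thesis using K by simp
    qed
  qed
  have "0 \<in> ?S" by (rule CollectI, rule exI[of _ "{}"]) simp
  then have "?S \<noteq> {}" by blast
  moreover have "finite ?S"
    by (rule finite_subset[of _ "{..card D + 1}"]) (use b in auto)
  ultimately show ?thesis unfolding clique_number_def using b by auto
qed


lemma per_run:
  fixes n :: nat and P :: "nat \<Rightarrow> 'a set" and \<kappa> :: "nat \<Rightarrow> nat"
    and f :: "'a set \<Rightarrow> real" and Sopt :: "'a set" and Sb :: "nat \<Rightarrow> 'a set"
  assumes fin: "\<forall>i\<in>{1..n}. finite (P i)"
    and disj: "\<forall>i\<in>{1..n}. \<forall>j\<in>{1..n}. i \<noteq> j \<longrightarrow> P i \<inter> P j = {}"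
    and budget: "\<forall>i\<in>{1..n}. \<kappa> i \<ge> 1"
    and norm: "normal_fn f"
    and mono: "monotone_fn (\<Union>i\<in>{1..n}. P i) f"
    and submod: "submodular_fn (\<Union>i\<in>{1..n}. P i) f"
    and opt: "Sopt \<in> feasible n P \<kappa>"
    and D: "D \<subseteq> {1..<n}"
    and run: "valid_run n P \<kappa> f D Sb"
  shows "0 \<le> f (\<Union>i\<in>{1..n}. Sb i) \<and> f Sopt \<le> (1 + real n - real (card D)) * f (\<Union>i\<in>{1..n}. Sb i)"
proof -
  define U where "U = (\<Union>i\<in>{1..n}. P i)"
  define G where "G = (\<Union>i\<in>{1..n}. Sb i)"
  define st where "st i = start_set D Sb i" for i
  define m where "m x = f (insert x G) - f G" for x
  have mono': "\<And>A B. A \<subseteq> B \<Longrightarrow> B \<subseteq> U \<Longrightarrow> f A \<le> f B"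
    using mono unfolding monotone_fn_def U_def by blast
  have sub': "submodular_fn U f" using submod U_def by simp
  have f0: "f {} = 0" using norm normal_fn_def by blast
  have gs: "greedy_steps f (P i) (\<kappa> i) (st i) (Sb i)" if "i \<in> {1..n}" for i
    using run that unfolding valid_run_def st_def by blast
  have SbU: "1 \<le> i \<longrightarrow> i \<le> n \<longrightarrow> Sb i \<subseteq> U" for i
  proof (induction i)
    case 0 then show ?case by simp
  next
    case (Suc i)
    show ?case
    proof (intro impI)
      assume h: "1 \<le> Suc i" "Suc i \<le> n"
      have "Sb (Suc i) \<subseteq> st (Suc i) \<union> P (Suc i)" using greedy_mono[OF gs[of "Suc i"]] h by auto
      moreover have "st (Suc i) \<subseteq> U"
        using Suc h unfolding st_def start_set_def by auto
      moreover have "P (Suc i) \<subseteq> U" using h U_def by auto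
      ultimately show "Sb (Suc i) \<subseteq> U" by blast
    qed
  qed
  have stSb: "st i \<subseteq> Sb i" if "i \<in> {1..n}" for i using greedy_mono[OF gs[OF that]] by blast
  have SbU': "Sb i \<subseteq> U" if "i \<in> {1..n}" for i using SbU that by auto
  have GU: "G \<subseteq> U" using SbU' G_def by blast
  have finU: "finite U" using fin U_def by auto
  have SoptU: "Sopt \<subseteq> U" and card_opt: "\<forall>i\<in>{1..n}. card (Sopt \<inter> P i) \<le> \<kappa> i"
    using opt unfolding feasible_def U_def by auto
  have finS: "finite Sopt" using SoptU finU finite_subset by blast
  have key: "f Sopt \<le> f G + (\<Sum>x\<in>Sopt - G. m x)"
  proof -
    have "f Sopt \<le> f (G \<union> Sopt)" using mono' SoptU GU by auto
    moreover have "f (G \<union> Sopt) - f G \<le> (\<Sum>x\<in>Sopt - G. m x)"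
      unfolding m_def by (rule submod_sum[OF finS GU SoptU sub'])
    ultimately show ?thesis by simp
  qed
  have split: "Sopt - G = (\<Union>i\<in>{1..n}. Sopt \<inter> P i - G)" using SoptU U_def by auto
  have sumsplit: "(\<Sum>x\<in>Sopt - G. m x) = (\<Sum>i\<in>{1..n}. \<Sum>x\<in>Sopt \<inter> P i - G. m x)"
    unfolding split
    by (rule sum.UNION_disjoint) (use finS disj in auto)
  have per_i: "(\<Sum>x\<in>Sopt \<inter> P i - G. m x) \<le> f (Sb i) - f (st i)" if i: "i \<in> {1..n}" for i
  proof -
    define \<Delta> where "\<Delta> = f (Sb i) - f (st i)"
    have d0: "\<Delta> \<ge> 0" using mono' stSb[OF i] SbU'[OF i] \<Delta>_def by auto
    have k1: "real (\<kappa> i) \<ge> 1" using budget i by auto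
    have "m x \<le> \<Delta> / real (\<kappa> i)" if x: "x \<in> Sopt \<inter> P i - G" for x
    proof -
      have "Sb i \<subseteq> G" using i G_def by auto
      then have "real (\<kappa> i) * m x \<le> \<Delta>"
        unfolding m_def \<Delta>_def
        by (rule greedy_bound[OF gs[OF i] _ GU _ _ sub']) (use x SoptU in auto)
      then show ?thesis using k1 by (simp add: field_simps)
    qed
    then have "(\<Sum>x\<in>Sopt \<inter> P i - G. m x) \<le> real (card (Sopt \<inter> P i - G)) * (\<Delta> / real (\<kappa> i))"
      using sum_bounded_above[of "Sopt \<inter> P i - G" m "\<Delta> / real (\<kappa> i)"] by simp
    also have "\<dots> \<le> real (\<kappa> i) * (\<Delta> / real (\<kappa> i))"
    proof (rule mult_right_mono)
      have "card (Sopt \<inter> P i - G) \<le> card (Sopt \<inter> P i)" using finS by (intro card_mono) auto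
      moreover have "card (Sopt \<inter> P i) \<le> \<kappa> i" using card_opt i by blast
      ultimately show "real (card (Sopt \<inter> P i - G)) \<le> real (\<kappa> i)" by simp
      show "0 \<le> \<Delta> / real (\<kappa> i)" using d0 k1 by simp
    qed
    also have "\<dots> = \<Delta>" using k1 by simp
    finally show ?thesis using \<Delta>_def by simp
  qed
  have finD: "finite D" using D finite_subset by blast
  have Dsub: "D \<subseteq> {1..n}" using D by auto
  have cardD: "card D \<le> n" using card_mono[OF _ Dsub] by simp
  have st_sum: "(\<Sum>i\<in>{1..n}. f (st i)) = (\<Sum>j\<in>D. f (Sb j))"
  proof -
    have "(\<Sum>i\<in>{1..n}. f (st i)) = (\<Sum>i\<in>{1..n}. if i \<ge> 2 \<and> i - 1 \<in> D then f (Sb (i - 1)) else 0)"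
      by (rule sum.cong) (auto simp: st_def start_set_def f0)
    also have "\<dots> = (\<Sum>i\<in>{i\<in>{1..n}. i \<ge> 2 \<and> i - 1 \<in> D}. f (Sb (i - 1)))"
      by (rule sum.inter_filter[symmetric]) simp
    also have "{i\<in>{1..n}. i \<ge> 2 \<and> i - 1 \<in> D} = Suc ` D"
    proof
      show "{i\<in>{1..n}. i \<ge> 2 \<and> i - 1 \<in> D} \<subseteq> Suc ` D"
      proof
        fix i assume "i \<in> {i\<in>{1..n}. i \<ge> 2 \<and> i - 1 \<in> D}"
        then have "i = Suc (i - 1)" "i - 1 \<in> D" by auto
        then show "i \<in> Suc ` D" by blast
      qed
      show "Suc ` D \<subseteq> {i\<in>{1..n}. i \<ge> 2 \<and> i - 1 \<in> D}" using D by auto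
    qed
    also have "(\<Sum>i\<in>Suc ` D. f (Sb (i - 1))) = (\<Sum>j\<in>D. f (Sb j))"
      by (subst sum.reindex) auto
    finally show ?thesis .
  qed
  have tele: "(\<Sum>i\<in>{1..n}. f (Sb i) - f (st i)) \<le> (real n - real (card D)) * f G"
  proof -
    have "(\<Sum>i\<in>{1..n}. f (Sb i)) = (\<Sum>i\<in>D. f (Sb i)) + (\<Sum>i\<in>{1..n} - D. f (Sb i))"
      using sum.subset_diff[OF Dsub, of "\<lambda>i. f (Sb i)"] by simp
    moreover have "(\<Sum>i\<in>{1..n} - D. f (Sb i)) \<le> real (card ({1..n} - D)) * f G"
      using sum_bounded_above[of "{1..n} - D" "\<lambda>i. f (Sb i)" "f G"] mono' GU G_def
      by (metis (no_types, lifting) DiffD1 UN_upper)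
    moreover have "card ({1..n} - D) = n - card D" using card_Diff_subset[OF finD Dsub] by simp
    ultimately have "(\<Sum>i\<in>{1..n}. f (Sb i)) - (\<Sum>j\<in>D. f (Sb j)) \<le> (real n - real (card D)) * f G"
      using cardD by (simp add: of_nat_diff)
    then show ?thesis using st_sum by (simp add: sum_subtractf)
  qed
  have "(\<Sum>x\<in>Sopt - G. m x) \<le> (\<Sum>i\<in>{1..n}. f (Sb i) - f (st i))"
    unfolding sumsplit by (rule sum_mono) (rule per_i)
  then have "f Sopt \<le> f G + (real n - real (card D)) * f G" using key tele by linarith
  moreover have "0 \<le> f G" using mono'[of "{}" G] GU f0 by simp
  ultimately show ?thesis unfolding G_def by (simp add: algebra_simps)
qed

theorem theorem1:
  fixes n :: nat and P :: "nat \<Rightarrow> 'a set" and \<kappa> :: "nat \<Rightarrow> nat"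
    and f :: "'a set \<Rightarrow> real" and p :: "nat \<Rightarrow> real"
    and Sopt :: "'a set" and Sbar :: "nat set \<Rightarrow> nat \<Rightarrow> 'a set"
  assumes fin: "\<forall>i\<in>{1..n}. finite (P i)"
    and disj: "\<forall>i\<in>{1..n}. \<forall>j\<in>{1..n}. i \<noteq> j \<longrightarrow> P i \<inter> P j = {}"
    and budget: "\<forall>i\<in>{1..n}. \<kappa> i \<ge> 1"
    and nonneg: "\<forall>S. S \<subseteq> (\<Union>i\<in>{1..n}. P i) \<longrightarrow> f S \<ge> 0"
    and norm: "normal_fn f"
    and mono: "monotone_fn (\<Union>i\<in>{1..n}. P i) f"
    and submod: "submodular_fn (\<Union>i\<in>{1..n}. P i) f"
    and opt: "Sopt \<in> feasible n P \<kappa>" "\<forall>S\<in>feasible n P \<kappa>. f S \<le> f Sopt"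
    and prob: "\<forall>i\<in>{1..<n}. 0 \<le> p i \<and> p i \<le> 1"
    and runs: "\<forall>D. D \<subseteq> {1..<n} \<longrightarrow> valid_run n P \<kappa> f D (Sbar D)"
  shows "(\<Sum>D\<in>Pow {1..<n}. outcome_prob n p D * f (\<Union>i\<in>{1..n}. Sbar D i))
         \<ge> (\<Sum>l=1..n. (1 / (2 + real n - real l)) *
               (\<Sum>D\<in>{D\<in>Pow {1..<n}. clique_number n D = l}. outcome_prob n p D)) * f Sopt"
proof -
  define c where "c l = 1 / (2 + real n - real l)" for l :: nat
  define pr where "pr D = outcome_prob n p D" for D
  define cn where "cn D = clique_number n D" for D
  define g where "g D = f (\<Union>i\<in>{1..n}. Sbar D i)" for D
  define A where "A = Pow {1..<n}"
  have finA: "finite A" unfolding A_def by simp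
  have fS: "0 \<le> f Sopt" using nonneg opt(1) unfolding feasible_def by auto
  have pr0: "0 \<le> pr D" if "D \<in> A" for D
    unfolding pr_def outcome_prob_def using prob by (intro prod_nonneg) auto
  have "(\<Sum>l=1..n. c l * (\<Sum>D\<in>{D\<in>A. cn D = l}. pr D)) * f Sopt
      = (\<Sum>l=1..n. \<Sum>D\<in>A. if cn D = l then c l * pr D * f Sopt else 0)"
  proof -
    have "c l * (\<Sum>D\<in>{D\<in>A. cn D = l}. pr D) * f Sopt
        = (\<Sum>D\<in>A. if cn D = l then c l * pr D * f Sopt else 0)" for l
    proof -
      have "c l * (\<Sum>D\<in>{D\<in>A. cn D = l}. pr D) * f Sopt = (\<Sum>D\<in>{D\<in>A. cn D = l}. c l * pr D * f Sopt)"
        by (simp add: sum_distrib_left sum_distrib_right)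
      also have "\<dots> = (\<Sum>D\<in>A. if cn D = l then c l * pr D * f Sopt else 0)"
        by (rule sum.inter_filter[OF finA])
      finally show ?thesis .
    qed
    then show ?thesis by (simp add: sum_distrib_right)
  qed
  also have "\<dots> = (\<Sum>D\<in>A. \<Sum>l=1..n. if cn D = l then c l * pr D * f Sopt else 0)"
    by (rule sum.swap)
  also have "\<dots> = (\<Sum>D\<in>A. if cn D \<in> {1..n} then c (cn D) * pr D * f Sopt else 0)"
    by (rule sum.cong) (simp_all add: sum.delta)
  also have "\<dots> \<le> (\<Sum>D\<in>A. pr D * g D)"
  proof (rule sum_mono)
    fix D assume DA: "D \<in> A"
    then have Dsub: "D \<subseteq> {1..<n}" unfolding A_def by simp
    have pr: "0 \<le> pr D" using pr0 DA .
    have pd: "0 \<le> g D \<and> f Sopt \<le> (1 + real n - real (card D)) * g D"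
      unfolding g_def
      by (rule per_run[OF fin disj budget norm mono submod opt(1) Dsub]) (use runs Dsub in blast)
    show "(if cn D \<in> {1..n} then c (cn D) * pr D * f Sopt else 0) \<le> pr D * g D"
    proof (cases "cn D \<in> {1..n}")
      case False
      have "0 \<le> pr D * g D" using pr pd by simp
      then show ?thesis using False by (simp only: if_False)
    next
      case True
      have l: "cn D \<le> card D + 1" unfolding cn_def by (rule clique_le[OF Dsub])
      have "card D \<le> card {1..<n}" by (rule card_mono) (use Dsub in auto)
      then have cD: "card D + 1 \<le> n" using True by auto
      define d where "d = 2 + real n - real (cn D)"
      have dpos: "d > 0" using True d_def by auto
      have dle: "1 + real n - real (card D) \<le> d" using l d_def by simp
      have "c (cn D) * f Sopt = f Sopt / d" unfolding c_def d_def by simp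
      also have "\<dots> \<le> (1 + real n - real (card D)) * g D / d"
        using pd dpos by (simp add: divide_right_mono)
      also have "\<dots> \<le> d * g D / d"
        using pd dpos dle by (intro divide_right_mono mult_right_mono) auto
      also have "\<dots> = g D" using dpos by simp
      finally have "c (cn D) * f Sopt \<le> g D" .
      then have "pr D * (c (cn D) * f Sopt) \<le> pr D * g D" using pr by (rule mult_left_mono)
      then show ?thesis using True by (simp add: algebra_simps)
    qed
  qed
  finally show ?thesis unfolding c_def pr_def cn_def g_def A_def by simp
qed

end
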